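(* Let $n\ge1$, $m\ge1$ and let $v$ be a vertex of $Y_{n,m}$, regarded also as a vertex of $Z_{n,m}$. Then $d_{Z_{n,m}}(v,0)=d_{Y_{n,m}}(v,0)$.
   Context: The Yoke graph $Y_{n,m}$ has vertices the tuples $v=(v_0,\dots,v_{m+1})$ with $v_0,v_{m+1}\in\mathbb{Z}_n$, $v_1,\dots,v_m\in\{0,1\}$, $\sum v_i\equiv0\pmod n$; the dYoke graph $Z_{n,m}$ is defined identically but with $v_1,\dots,v_m\in\{-1,0,1\}$, so the vertex set of $Y_{n,m}$ is contained in that of $Z_{n,m}$. In both, $u\sim v$ iff there is $0\le i\le m$ with $u_j=v_j$ for $j\notin\{i,i+1\}$ and either ($u_i=v_i+1$, $u_{i+1}=v_{i+1}-1$) or ($u_i=v_i-1$, $u_{i+1}=v_{i+1}+1$), buckets mod $n$. $0$ is the all-zero vertex. *)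

theory Defs
  imports Main "HOL-Library.Extended_Nat"
begin

text \<open>Vertices are integer lists v = [v_0, ..., v_(m+1)] of length m+2.
  The buckets v_0, v_(m+1) are residues represented in {0..<n}.\<close>

definition yoke_vertex :: "nat \<Rightarrow> nat \<Rightarrow> int list \<Rightarrow> bool" where
  "yoke_vertex n m v \<longleftrightarrow> length v = m + 2 \<and>
     v ! 0 \<in> {0..<int n} \<and> v ! (m+1) \<in> {0..<int n} \<and>
     (\<forall>i\<in>{1..m}. v ! i \<in> {0, 1}) \<and> sum_list v mod int n = 0"

definition dyoke_vertex :: "nat \<Rightarrow> nat \<Rightarrow> int list \<Rightarrow> bool" where
  "dyoke_vertex n m v \<longleftrightarrow> length v = m + 2 \<and>
     v ! 0 \<in> {0..<int n} \<and> v ! (m+1) \<in> {0..<int n} \<and>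
     (\<forall>i\<in>{1..m}. v ! i \<in> {-1, 0, 1}) \<and> sum_list v mod int n = 0"

definition coord_add :: "nat \<Rightarrow> nat \<Rightarrow> nat \<Rightarrow> int \<Rightarrow> int \<Rightarrow> int" where
  "coord_add n m k x d = (if k = 0 \<or> k = m + 1 then (x + d) mod int n else x + d)"

definition yoke_adj :: "nat \<Rightarrow> nat \<Rightarrow> int list \<Rightarrow> int list \<Rightarrow> bool" where
  "yoke_adj n m u v \<longleftrightarrow> length u = m + 2 \<and> length v = m + 2 \<and>
     (\<exists>i\<le>m. (\<forall>j<m+2. j \<noteq> i \<and> j \<noteq> i + 1 \<longrightarrow> u ! j = v ! j) \<and>
        ((u ! i = coord_add n m i (v ! i) 1 \<and> u ! (i+1) = coord_add n m (i+1) (v ! (i+1)) (-1)) \<or>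
         (u ! i = coord_add n m i (v ! i) (-1) \<and> u ! (i+1) = coord_add n m (i+1) (v ! (i+1)) 1)))"

definition graph_edges :: "('a \<Rightarrow> bool) \<Rightarrow> ('a \<Rightarrow> 'a \<Rightarrow> bool) \<Rightarrow> ('a \<times> 'a) set" where
  "graph_edges V A = {(u, v). V u \<and> V v \<and> A u v}"

text \<open>Graph distance (infinity if not connected): least length of a walk.\<close>
definition graph_dist :: "('a \<Rightarrow> bool) \<Rightarrow> ('a \<Rightarrow> 'a \<Rightarrow> bool) \<Rightarrow> 'a \<Rightarrow> 'a \<Rightarrow> enat" where
  "graph_dist V A u v = (INF k \<in> {k. (u, v) \<in> graph_edges V A ^^ k}. enat k)"

definition Y_dist :: "nat \<Rightarrow> nat \<Rightarrow> int list \<Rightarrow> int list \<Rightarrow> enat" where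
  "Y_dist n m = graph_dist (yoke_vertex n m) (yoke_adj n m)"

definition Z_dist :: "nat \<Rightarrow> nat \<Rightarrow> int list \<Rightarrow> int list \<Rightarrow> enat" where
  "Z_dist n m = graph_dist (dyoke_vertex n m) (yoke_adj n m)"

definition zero_vertex :: "nat \<Rightarrow> int list" where
  "zero_vertex m = replicate (m + 2) 0"

end

theory Submission
  imports Defs
begin

definition PP :: "int list \<Rightarrow> nat \<Rightarrow> int" where
  "PP v j = (\<Sum>k\<in>{1..j}. v!k)"

definition cost :: "nat \<Rightarrow> int list \<Rightarrow> int \<Rightarrow> int" where
  "cost m v c = (\<Sum>j\<in>{0..m}. \<bar>c - PP v j\<bar>)"

definition mv :: "nat \<Rightarrow> nat \<Rightarrow> int list \<Rightarrow> nat \<Rightarrow> int \<Rightarrow> int list" where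
  "mv n m v i d = v[i := coord_add n m i (v!i) d, Suc i := coord_add n m (Suc i) (v!Suc i) (-d)]"

lemma sum_list_upd: "i < length xs \<Longrightarrow> sum_list (xs[i:=x]) = sum_list xs - xs!i + (x::int)"
  by (induction xs arbitrary: i) (auto split: nat.splits)

lemma mv_len[simp]: "length (mv n m v i d) = length v"
  by (simp add: mv_def)

lemma mv_nth: assumes "length v = m+2" "i \<le> m"
  shows "mv n m v i d ! j = (if j = Suc i then coord_add n m (Suc i) (v!Suc i) (-d)
     else if j = i then coord_add n m i (v!i) d else v!j)"
  using assms by (simp add: mv_def nth_list_update)

lemma mv_PP: assumes "length v = m+2" "i \<le> m" "1 \<le> m" "j \<le> m"
  shows "PP (mv n m v i d) j = PP v j + (if i = 0 then (if j = 0 then 0 else -d) else if j = i then d else 0)"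
proof -
  have diff: "mv n m v i d ! k - v ! k = (if k = i then d else 0) + (if k = Suc i then -d else 0)"
    if "k \<in> {1..j}" for k
  proof -
    have k: "k \<noteq> 0" "k \<noteq> m + 1" "k \<noteq> Suc m" using that assms by auto
    show ?thesis
    proof (cases "k = Suc i")
      case True then show ?thesis using assms k by (simp add: mv_nth coord_add_def)
    next
      case False then show ?thesis using assms k by (simp add: mv_nth coord_add_def)
    qed
  qed
  have "PP (mv n m v i d) j - PP v j = (\<Sum>k\<in>{1..j}. mv n m v i d ! k - v ! k)"
    by (simp add: PP_def sum_subtractf)
  also have "\<dots> = (\<Sum>k\<in>{1..j}. (if k = i then d else 0) + (if k = Suc i then -d else 0))"
    using diff by (rule sum.cong[OF refl])
  also have "\<dots> = (if i \<in> {1..j} then d else 0) + (if Suc i \<in> {1..j} then -d else 0)"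
    by (simp add: sum.distrib sum.delta)
  finally have "PP (mv n m v i d) j - PP v j = (if i \<in> {1..j} then d else 0) + (if Suc i \<in> {1..j} then -d else 0)" .
  then show ?thesis
    by (cases "i = 0"; cases "j = i"; cases "i < j") (simp_all add: atLeastAtMost_iff)
qed

lemma mv_sum: assumes "length v = m+2" "i \<le> m"
  shows "sum_list (mv n m v i d) mod int n = sum_list v mod int n"
proof -
  have s: "sum_list (mv n m v i d) = sum_list v + (coord_add n m i (v!i) d - (v!i + d))
     + (coord_add n m (Suc i) (v!Suc i) (-d) - (v!Suc i + -d))"
    using assms by (simp add: mv_def sum_list_upd nth_list_update)
  have dv: "int n dvd (coord_add n m k x e - (x + e))" for k x e
    unfolding coord_add_def by (auto simp: mod_eq_dvd_iff[symmetric])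
  obtain q1 where q1: "coord_add n m i (v!i) d - (v!i + d) = int n * q1"
    using dv[of i "v!i" d] unfolding dvd_def by blast
  obtain q2 where q2: "coord_add n m (Suc i) (v!Suc i) (-d) - (v!Suc i + -d) = int n * q2"
    using dv[of "Suc i" "v!Suc i" "-d"] unfolding dvd_def by blast
  have "sum_list (mv n m v i d) = sum_list v + int n * (q1 + q2)"
    unfolding s q1 q2 by (simp add: algebra_simps)
  then show ?thesis by simp
qed

lemma mv_valid: assumes "length v = m+2" "i \<le> m" "(c + v!0) mod int n = 0"
  shows "(c - (if i = 0 then d else 0) + mv n m v i d ! 0) mod int n = 0"
  using assms by (auto simp: mv_nth coord_add_def mod_simps)

lemma mv_terms: assumes "length v = m+2" "i \<le> m" "1 \<le> m" "j \<le> m"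
  shows "(c - (if i = 0 then d else 0)) - PP (mv n m v i d) j = (c - PP v j) - (if j = i then d else 0)"
  using mv_PP[OF assms, of n d] by (auto simp: PP_def)

lemma sum_one_change:
  fixes a b :: "nat \<Rightarrow> int"
  assumes "finite A" "i \<in> A" "\<And>j. j \<in> A \<Longrightarrow> j \<noteq> i \<Longrightarrow> a j = b j"
  shows "(\<Sum>j\<in>A. \<bar>a j\<bar>) = (\<Sum>j\<in>A. \<bar>b j\<bar>) - \<bar>b i\<bar> + \<bar>a i\<bar>"
proof -
  have "(\<Sum>j\<in>A. \<bar>a j\<bar>) = \<bar>a i\<bar> + (\<Sum>j\<in>A - {i}. \<bar>a j\<bar>)"
    using assms by (simp add: sum.remove)
  moreover have "(\<Sum>j\<in>A. \<bar>b j\<bar>) = \<bar>b i\<bar> + (\<Sum>j\<in>A - {i}. \<bar>b j\<bar>)"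
    using assms by (simp add: sum.remove)
  moreover have "(\<Sum>j\<in>A - {i}. \<bar>a j\<bar>) = (\<Sum>j\<in>A - {i}. \<bar>b j\<bar>)"
    using assms by (intro sum.cong) auto
  ultimately show ?thesis by simp
qed

lemma mv_cost: assumes "length v = m+2" "i \<le> m" "1 \<le> m"
  shows "cost m (mv n m v i d) (c - (if i = 0 then d else 0)) = cost m v c - \<bar>c - PP v i\<bar> + \<bar>c - PP v i - d\<bar>"
proof -
  have t: "\<And>j. j \<in> {0..m} \<Longrightarrow> (c - (if i = 0 then d else 0)) - PP (mv n m v i d) j = (c - PP v j) - (if j = i then d else 0)"
    using mv_terms assms by auto
  have "cost m (mv n m v i d) (c - (if i = 0 then d else 0)) = (\<Sum>j\<in>{0..m}. \<bar>c - PP v j - (if j = i then d else 0)\<bar>)"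
    unfolding cost_def
    apply (rule sum.cong[OF refl])
    apply (subst t)
     apply assumption
    apply (rule refl)
    done
  also have "\<dots> = cost m v c - \<bar>c - PP v i\<bar> + \<bar>c - PP v i - d\<bar>"
    unfolding cost_def
    using sum_one_change[where i=i and b="\<lambda>j. c - PP v j" and A="{0..m}"
       and a="\<lambda>j. c - PP v j - (if j = i then d else 0)"] assms by simp
  finally show ?thesis .
qed

lemma adj_mv: assumes "yoke_adj n m v u"
  shows "\<exists>i d. i \<le> m \<and> (d = 1 \<or> d = -1) \<and> v = mv n m u i d \<and> length u = m + 2"
proof -
  from assms obtain i where i: "i \<le> m" and len: "length v = m+2" "length u = m+2"
    and eq: "\<forall>j<m+2. j \<noteq> i \<and> j \<noteq> i + 1 \<longrightarrow> v ! j = u ! j"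
    and c: "(v ! i = coord_add n m i (u ! i) 1 \<and> v ! (i+1) = coord_add n m (i+1) (u ! (i+1)) (-1)) \<or>
         (v ! i = coord_add n m i (u ! i) (-1) \<and> v ! (i+1) = coord_add n m (i+1) (u ! (i+1)) 1)"
    unfolding yoke_adj_def by blast
  from c obtain d where d: "d = 1 \<or> d = -1" "v ! i = coord_add n m i (u ! i) d"
     "v ! (i+1) = coord_add n m (i+1) (u ! (i+1)) (-d)" by fastforce
  have "v = mv n m u i d"
    apply (rule nth_equalityI)
    using len i eq d by (auto simp: mv_nth)
  then show ?thesis using i d len by blast
qed

lemma coord_add_inv: assumes "k = 0 \<or> k = m+1 \<Longrightarrow> 0 \<le> x \<and> x < int n"
  shows "coord_add n m k (coord_add n m k x d) (-d) = x"
  using assms by (auto simp: coord_add_def mod_simps)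

lemma coord_add_inv2: assumes "k = 0 \<or> k = m+1 \<Longrightarrow> 0 \<le> x \<and> x < int n"
  shows "coord_add n m k (coord_add n m k x (-d)) d = x"
  using coord_add_inv[OF assms, where d="-d"] by simp

lemma mv_adj: assumes "length v = m+2" "i \<le> m" "d = 1 \<or> d = -1"
   "v!0 \<in> {0..<int n}" "v!(m+1) \<in> {0..<int n}"
  shows "yoke_adj n m v (mv n m v i d)"
proof -
  let ?w = "mv n m v i d"
  have a: "v ! i = coord_add n m i (?w ! i) (-d)"
    using assms by (auto simp: mv_nth intro!: coord_add_inv[symmetric])
  have b: "v ! (i+1) = coord_add n m (i+1) (?w ! (i+1)) d"
    using assms by (auto simp: mv_nth intro!: coord_add_inv2[symmetric])
  have e: "\<forall>j<m+2. j \<noteq> i \<and> j \<noteq> i + 1 \<longrightarrow> v ! j = ?w ! j"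
    using assms by (auto simp: mv_nth)
  have disj: "(v ! i = coord_add n m i (?w ! i) 1 \<and> v ! (i+1) = coord_add n m (i+1) (?w ! (i+1)) (-1)) \<or>
         (v ! i = coord_add n m i (?w ! i) (-1) \<and> v ! (i+1) = coord_add n m (i+1) (?w ! (i+1)) 1)"
    using assms(3)
  proof
    assume "d = 1" then show ?thesis using a b by simp
  next
    assume "d = -1" then show ?thesis using a b by simp
  qed
  have "length ?w = m + 2" using assms by simp
  then show ?thesis unfolding yoke_adj_def
    using assms(1,2) disj e by blast
qed


lemma PP0[simp]: "PP v 0 = 0"
  by (simp add: PP_def)

lemma PP_Suc: "PP v (Suc j) = PP v j + v!(Suc j)"
  by (simp add: PP_def)

lemma PP_const: "(\<And>k. q < k \<Longrightarrow> k \<le> q + t \<Longrightarrow> v!k = 0) \<Longrightarrow> PP v (q+t) = PP v q"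
  by (induction t) (auto simp: PP_Suc)

lemma PP_mono: "(\<And>k. q < k \<Longrightarrow> k \<le> q + t \<Longrightarrow> v!k \<ge> 0) \<Longrightarrow> PP v q \<le> PP v (q+t)"
proof (induction t)
  case 0 then show ?case by simp
next
  case (Suc t)
  then have "PP v q \<le> PP v (q+t)" by simp
  moreover have "v!(Suc (q+t)) \<ge> 0" using Suc.prems by simp
  ultimately show ?case by (simp add: PP_Suc)
qed

lemma yv_nonneg: "yoke_vertex n m v \<Longrightarrow> 1 \<le> k \<Longrightarrow> k \<le> m \<Longrightarrow> v!k \<ge> 0"
  unfolding yoke_vertex_def by force

lemma PP_le_m: assumes "yoke_vertex n m v" "j \<le> m" shows "PP v j \<le> PP v m" "0 \<le> PP v j"
proof -
  have "PP v j \<le> PP v (j + (m - j))"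
    by (rule PP_mono) (use assms yv_nonneg in auto)
  then show "PP v j \<le> PP v m" using assms by simp
  have "PP v 0 \<le> PP v (0 + j)"
    by (rule PP_mono) (use assms yv_nonneg in auto)
  then show "0 \<le> PP v j" by simp
qed

lemma zero_nth: "k < m + 2 \<Longrightarrow> zero_vertex m ! k = 0"
  unfolding zero_vertex_def by (rule nth_replicate)

lemma zero_len[simp]: "length (zero_vertex m) = m + 2"
  unfolding zero_vertex_def by simp

lemma zero_PP: "j \<le> m \<Longrightarrow> PP (zero_vertex m) j = 0"
  unfolding PP_def by (rule sum.neutral) (auto simp: zero_nth)

lemma zero_cost: "cost m (zero_vertex m) 0 = 0"
  by (simp add: cost_def zero_PP)

lemma zero_yv: "yoke_vertex n m (zero_vertex m)" if "n \<ge> 1"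
  using that unfolding yoke_vertex_def by (auto simp: zero_nth) (simp add: zero_vertex_def sum_list_replicate del: replicate.simps)

lemma lower: assumes "1 \<le> m"
  shows "(v, zero_vertex m) \<in> graph_edges V (yoke_adj n m) ^^ k \<Longrightarrow>
     \<exists>c. (c + v!0) mod int n = 0 \<and> cost m v c \<le> int k"
proof (induction k arbitrary: v)
  case 0
  then have "v = zero_vertex m" by simp
  then show ?case using zero_cost by (intro exI[of _ 0]) (simp add: zero_nth)
next
  case (Suc k)
  from relpow_Suc_D2[OF Suc.prems] obtain u where
    e: "(v, u) \<in> graph_edges V (yoke_adj n m)" and r: "(u, zero_vertex m) \<in> graph_edges V (yoke_adj n m) ^^ k"
    by blast
  have "\<exists>c. (c + u!0) mod int n = 0 \<and> cost m u c \<le> int k" by (rule Suc.IH[OF r])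
  then obtain c where c0: "(c + u!0) mod int n = 0 \<and> cost m u c \<le> int k" by (elim exE)
  then have c: "(c + u!0) mod int n = 0" "cost m u c \<le> int k" by simp_all
  from e have "yoke_adj n m v u" by (simp add: graph_edges_def)
  from adj_mv[OF this] obtain i d where id: "i \<le> m" "d = 1 \<or> d = -1" "v = mv n m u i d" "length u = m + 2"
    by blast
  have v1: "(c - (if i = 0 then d else 0) + v ! 0) mod int n = 0"
    using mv_valid[OF id(4) id(1) c(1)] id(3) by simp
  have v2: "cost m v (c - (if i = 0 then d else 0)) \<le> int (Suc k)"
    using mv_cost[OF id(4) id(1) assms, of n d c] id c by auto
  show ?case
    apply (rule exI[where x="c - (if i = 0 then d else 0)"])
    using v1 v2 by simp
qed


lemma relpow_mono_sub: "(R :: ('a \<times> 'a) set) \<subseteq> S \<Longrightarrow> (x, y) \<in> R ^^ k \<Longrightarrow> (x, y) \<in> S ^^ k"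
proof (induction k arbitrary: y)
  case 0 then show ?case by simp
next
  case (Suc k)
  from Suc.prems(2) obtain z where "(x, z) \<in> R ^^ k" "(z, y) \<in> R" by (rule relpow_Suc_E)
  then show ?case using Suc by (meson relpow_Suc_I subsetD)
qed

lemma base_zero:
  assumes n1: "n \<ge> 1" and yv: "yoke_vertex n m v" and val: "(c + v!0) mod int n = 0"
    and c0: "cost m v c = 0"
  shows "v = zero_vertex m"
proof -
  have len: "length v = m + 2" and r0: "v!0 \<in> {0..<int n}" and rm: "v!(m+1) \<in> {0..<int n}"
    and int01: "\<And>i. i \<in> {1..m} \<Longrightarrow> v ! i \<in> {0, 1}" and sm: "sum_list v mod int n = 0"
    using yv unfolding yoke_vertex_def by auto
  have all0: "\<forall>j\<in>{0..m}. \<bar>c - PP v j\<bar> = 0"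
    using c0 unfolding cost_def by (subst sum_nonneg_eq_0_iff[symmetric]) auto
  then have cz: "c = 0" by (metis PP0 abs_eq_0 atLeastAtMost_iff diff_zero le0)
  have PPz: "PP v j = 0" if "j \<le> m" for j using all0 that cz by auto
  have intz: "v ! j = 0" if "1 \<le> j" "j \<le> m" for j
  proof -
    define j' where "j' = j - 1"
    have j': "j = Suc j'" using that j'_def by simp
    have "PP v (Suc j') = PP v j' + v ! Suc j'" by (rule PP_Suc)
    then show ?thesis using PPz[of j] PPz[of j'] that j' by simp
  qed
  have v0: "v!0 = 0" using val cz r0 by (simp add: mod_pos_pos_trivial)
  have "sum_list v = (\<Sum>k = 0..<length v. v ! k)" by (rule sum_list_sum_nth)
  also have "\<dots> = (\<Sum>k = 0..<Suc m. v ! k) + v ! Suc m" using len by simp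
  also have "(\<Sum>k = 0..<Suc m. v ! k) = 0"
  proof (rule sum.neutral, intro ballI)
    fix k assume "k \<in> {0..<Suc m}"
    then show "v ! k = 0" using v0 intz[of k] by (cases "k = 0") auto
  qed
  finally have "sum_list v = v ! Suc m" by simp
  then have vm: "v ! (m+1) = 0" using sm rm by (simp add: mod_pos_pos_trivial)
  show ?thesis
  proof (rule nth_equalityI)
    show "length v = length (zero_vertex m)" using len by simp
    fix k assume "k < length v"
    then show "v ! k = zero_vertex m ! k"
      using len v0 vm intz[of k] zero_nth[of k m]
      by (cases "k = 0"; cases "k = m + 1") auto
  qed
qed

lemma upper_step:
  assumes n1: "n \<ge> 1" and m1: "1 \<le> m" and yv: "yoke_vertex n m v" and val: "(c + v!0) mod int n = 0"
    and cs: "cost m v c = int (Suc k)"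
  shows "\<exists>w c'. yoke_vertex n m w \<and> yoke_adj n m v w \<and> (c' + w!0) mod int n = 0 \<and> cost m w c' = int k"
proof -
  have len: "length v = m + 2" and r0: "v!0 \<in> {0..<int n}" and rm: "v!(m+1) \<in> {0..<int n}"
    and int01: "\<And>i. i \<in> {1..m} \<Longrightarrow> v ! i \<in> {0, 1}" and sm: "sum_list v mod int n = 0"
    using yv unfolding yoke_vertex_def by auto
  have np: "int n > 0" using n1 by simp
  have bucket: "coord_add n m k x e \<in> {0..<int n}" if "k = 0 \<or> k = m + 1" for k x e
    using that np by (auto simp: coord_add_def)
  show ?thesis
  proof (cases "c > 0")
    case True
    define Q where "Q p \<longleftrightarrow> 1 \<le> p \<and> (p = m+1 \<or> v!p = 1)" for p
    have "Q (m+1)" by (simp add: Q_def)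
    then obtain p where Qp: "Q p" and lt: "\<And>q. q < p \<Longrightarrow> \<not> Q q"
      using exists_least_iff[of Q] by blast
    have p1: "1 \<le> p" using Qp by (simp add: Q_def)
    have pm: "p \<le> m + 1"
    proof (rule ccontr)
      assume "\<not> p \<le> m + 1"
      then show False using lt[of "m+1"] \<open>Q (m+1)\<close> by simp
    qed
    have zeros: "v ! k = 0" if "0 < k" "k \<le> p - 1" for k
    proof -
      have "\<not> Q k" using lt that p1 by simp
      then have "v!k \<noteq> 1" "k \<le> m" using that pm by (auto simp: Q_def)
      then show ?thesis using int01[of k] that by auto
    qed
    define i where "i = p - 1"
    have im: "i \<le> m" using pm i_def by simp
    have PPi: "PP v i = 0"
      using PP_const[of 0 i v] zeros i_def by simp
    define w where "w = mv n m v i 1"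
    have yw: "yoke_vertex n m w"
      unfolding yoke_vertex_def
    proof (intro conjI ballI)
      show "length w = m + 2" using len w_def by simp
      show "w ! 0 \<in> {0..<int n}"
        using r0 bucket[of 0] len im by (cases "i = 0") (simp_all add: w_def mv_nth)
      show "w ! (m+1) \<in> {0..<int n}"
        using rm bucket[of "m+1"] len im by (cases "Suc i = m + 1") (simp_all add: w_def mv_nth)
      show "sum_list w mod int n = 0" using mv_sum[OF len im] sm w_def by simp
      fix k assume k: "k \<in> {1..m}"
      show "w ! k \<in> {0, 1}"
      proof (cases "k = Suc i")
        case True
        then have "p = k" using i_def p1 by simp
        then have "v ! k = 1" using Qp k by (auto simp: Q_def)
        then show ?thesis using True k len im by (simp add: w_def mv_nth coord_add_def)
      next
        case False
        show ?thesis
        proof (cases "k = i")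
          case True
          then have "v ! k = 0" using zeros[of k] k i_def by auto
          then show ?thesis using True False k len im by (simp add: w_def mv_nth coord_add_def)
        next
          case False2: False
          then show ?thesis using False k len im int01[OF k] by (simp add: w_def mv_nth)
        qed
      qed
    qed
    have adj: "yoke_adj n m v w" unfolding w_def by (rule mv_adj) (use len im r0 rm in auto)
    have vw: "(c - (if i = 0 then 1 else 0) + w ! 0) mod int n = 0"
      using mv_valid[OF len im val] w_def by simp
    have cw: "cost m w (c - (if i = 0 then 1 else 0)) = int k"
      using mv_cost[OF len im m1, of n 1 c] w_def cs PPi True by simp
    show ?thesis
      apply (rule exI[where x=w])
      apply (rule exI[where x="c - (if i = 0 then 1 else 0)"])
      apply (intro conjI)
         apply (rule yw)
        apply (rule adj)
       apply (rule vw)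
      apply (rule cw)
      done
  next
    case False
    then have c0: "c \<le> 0" by simp
    show ?thesis
    proof (cases "c < PP v m")
      case True
      define R where "R r \<longleftrightarrow> r \<le> m \<and> (m - r = 0 \<or> v!(m - r) = 1)" for r
      have "R m" by (simp add: R_def)
      then obtain r where Rr: "R r" and lt: "\<And>q. q < r \<Longrightarrow> \<not> R q"
        using exists_least_iff[of R] by blast
      define i where "i = m - r"
      have im: "i \<le> m" using i_def by simp
      have rm': "r \<le> m" using Rr R_def by simp
      have zeros: "v ! k = 0" if "i < k" "k \<le> m" for k
      proof -
        have "m - k < r" using that i_def rm' by simp
        then have "\<not> R (m - k)" using lt by simp
        then have "v!k \<noteq> 1" using that by (auto simp: R_def)
        then show ?thesis using int01[of k] that by auto
      qed
      have PPi: "PP v m = PP v i"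
        using PP_const[of i "m - i" v] zeros im by simp
      define w where "w = mv n m v i (-1)"
      have yw: "yoke_vertex n m w"
        unfolding yoke_vertex_def
      proof (intro conjI ballI)
        show "length w = m + 2" using len w_def by simp
        show "w ! 0 \<in> {0..<int n}"
          using r0 bucket[of 0] len im by (cases "i = 0") (simp_all add: w_def mv_nth)
        show "w ! (m+1) \<in> {0..<int n}"
          using rm bucket[of "m+1"] len im by (cases "Suc i = m + 1") (simp_all add: w_def mv_nth)
        show "sum_list w mod int n = 0" using mv_sum[OF len im] sm w_def by simp
        fix k assume k: "k \<in> {1..m}"
        show "w ! k \<in> {0, 1}"
        proof (cases "k = Suc i")
          case True
          then have "v ! k = 0" using zeros[of k] k by simp
          then show ?thesis using True k len im by (simp add: w_def mv_nth coord_add_def)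
        next
          case False
          show ?thesis
          proof (cases "k = i")
            case True
            then have "v ! k = 1" using Rr k i_def by (auto simp: R_def)
            then show ?thesis using True False k len im by (simp add: w_def mv_nth coord_add_def)
          next
            case False2: False
            then show ?thesis using False k len im int01[OF k] by (simp add: w_def mv_nth)
          qed
        qed
      qed
      have adj: "yoke_adj n m v w" unfolding w_def by (rule mv_adj) (use len im r0 rm in auto)
      have vw: "(c - (if i = 0 then -1 else 0) + w ! 0) mod int n = 0"
        using mv_valid[OF len im val] w_def by simp
      have cw: "cost m w (c - (if i = 0 then -1 else 0)) = int k"
        using mv_cost[OF len im m1, of n "-1" c] w_def cs PPi True by simp
      show ?thesis
      apply (rule exI[where x=w])
      apply (rule exI[where x="c - (if i = 0 then -1 else 0)"])
      apply (intro conjI)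
         apply (rule yw)
        apply (rule adj)
       apply (rule vw)
      apply (rule cw)
      done
    next
      case False
      have "PP v m \<ge> 0" using PP_le_m[OF yv, of m] by simp
      then have z: "c = 0" "PP v m = 0" using False c0 by auto
      have "PP v j = 0" if "j \<le> m" for j using PP_le_m[OF yv that] z by simp
      then have "cost m v c = 0" unfolding cost_def using z by simp
      then show ?thesis using cs by simp
    qed
  qed
qed

lemma upper:
  assumes n1: "n \<ge> 1" and m1: "1 \<le> m"
  shows "yoke_vertex n m v \<Longrightarrow> (c + v!0) mod int n = 0 \<Longrightarrow> cost m v c = int k \<Longrightarrow>
    (v, zero_vertex m) \<in> graph_edges (yoke_vertex n m) (yoke_adj n m) ^^ k"
proof (induction k arbitrary: v c)
  case 0
  then have "v = zero_vertex m" using base_zero[OF n1] by simp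
  then show ?case by simp
next
  case (Suc k)
  have "\<exists>w c'. yoke_vertex n m w \<and> yoke_adj n m v w \<and> (c' + w!0) mod int n = 0 \<and> cost m w c' = int k"
    using upper_step[OF n1 m1 Suc.prems] .
  then obtain w c' where w0: "yoke_vertex n m w \<and> yoke_adj n m v w \<and> (c' + w!0) mod int n = 0 \<and> cost m w c' = int k"
    by (elim exE)
  then have w: "yoke_vertex n m w" "yoke_adj n m v w" "(c' + w!0) mod int n = 0" "cost m w c' = int k"
    by simp_all
  have "(v, w) \<in> graph_edges (yoke_vertex n m) (yoke_adj n m)"
    using w Suc.prems(1) by (simp add: graph_edges_def)
  moreover have "(w, zero_vertex m) \<in> graph_edges (yoke_vertex n m) (yoke_adj n m) ^^ k"
    using Suc.IH[OF w(1) w(3) w(4)] .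
  ultimately show ?case by (rule relpow_Suc_I2)
qed

theorem corollary5p33:
  fixes n m :: nat and v :: "int list"
  assumes "n \<ge> 1" and "m \<ge> 1" and "yoke_vertex n m v"
  shows "Z_dist n m v (zero_vertex m) = Y_dist n m v (zero_vertex m)"
proof (rule antisym)
  have sub: "graph_edges (yoke_vertex n m) (yoke_adj n m) \<subseteq> graph_edges (dyoke_vertex n m) (yoke_adj n m)"
    unfolding graph_edges_def yoke_vertex_def dyoke_vertex_def by auto
  show "Z_dist n m v (zero_vertex m) \<le> Y_dist n m v (zero_vertex m)"
    unfolding Z_dist_def Y_dist_def graph_dist_def
    by (rule INF_superset_mono) (use relpow_mono_sub[OF sub] in auto)
  show "Y_dist n m v (zero_vertex m) \<le> Z_dist n m v (zero_vertex m)"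
    unfolding Z_dist_def graph_dist_def
  proof (rule INF_greatest)
    fix k assume "k \<in> {k. (v, zero_vertex m) \<in> graph_edges (dyoke_vertex n m) (yoke_adj n m) ^^ k}"
    then have "(v, zero_vertex m) \<in> graph_edges (dyoke_vertex n m) (yoke_adj n m) ^^ k" by simp
    from lower[OF assms(2) this] obtain c where c0: "(c + v!0) mod int n = 0 \<and> cost m v c \<le> int k"
      by (elim exE)
    have nn: "cost m v c \<ge> 0" unfolding cost_def by (simp add: sum_nonneg)
    have "(v, zero_vertex m) \<in> graph_edges (yoke_vertex n m) (yoke_adj n m) ^^ nat (cost m v c)"
      using upper[OF assms(1,2) assms(3), of c "nat (cost m v c)"] c0 nn by simp
    then have "Y_dist n m v (zero_vertex m) \<le> enat (nat (cost m v c))"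
      unfolding Y_dist_def graph_dist_def by (intro INF_lower) simp
    also have "\<dots> \<le> enat k" using c0 nn by (simp add: nat_le_iff)
    finally show "Y_dist n m v (zero_vertex m) \<le> enat k" .
  qed
qed

end
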